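(* Let $F$ be a minimally unsatisfiable clause-set and $\vec{v} = (v_1,\dots,v_n)$, $n\ge 2$, a singular tuple for $F$ with singularity-degree tuple $(m_1,\dots,m_n)$. Let $i \in \{1,\dots,n-1\}$, let $\pi$ be the permutation of $\{1,\dots,n\}$ exchanging $i$ and $i+1$ and fixing all other elements, and let $\vec{v}' := (v_{\pi(1)},\dots,v_{\pi(n)})$. When $\vec{v}'$ is a singular tuple for $F$ (i.e., $\pi$ is singularity-preserving), let $(m_1',\dots,m_n')$ be its singularity-degree tuple. Then: 1. If $\pi$ is singularity-preserving, then $m_j' = m_j$ for all $j \in \{1,\dots,n\}\setminus\{i,i+1\}$. 2. Assume $m_i \ge 2$. Then (a) $\pi$ is singularity-preserving; (b) $m_i' \le m_{i+1}+1$; (c) $m_{i+1}' \ge m_i - 1$; (d) if $m_{i+1}=1$ then $m_i' = 1$; (e) if $m_{i+1}\ge 2$ then $m_{i+1}' \ge 2$. 3. Assume $m_i = 1$. (a) If $m_{i+1} = 1$, then $\pi$ is singularity-preserving, $m_{i+1}' = 1$ and $m_i' \in \{1,2\}$. (b) If $m_{i+1} \ge 2$, then $\pi$ is singularity-preserving if and only if $v_{i+1}$ is singular for $\mathrm{DP}_{v_1,\dots,v_{i-1}}(F)$; and if $\pi$ is singularity-preserving then $m_i' \ge 2$.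
   Context: Literals are variables $v$ and complements $\overline{v}$; a clause is a finite set of literals with no complementary pair; a clause-set is a finite set of clauses; $\mathrm{ldeg}_F(x)$ is the number of clauses of $F$ containing literal $x$, and $\mathrm{vdeg}_F(v)=\mathrm{ldeg}_F(v)+\mathrm{ldeg}_F(\overline{v})$. $\mathrm{DP}_v(F) := \{C \in F : v \notin \mathrm{var}(C)\} \cup \{(C \cup D)\setminus\{v,\overline{v}\} : C, D \in F,\ C \cap \overline{D} = \{v\}\}$, and $\mathrm{DP}_{v_1,\dots,v_k}(F)$ is the result of applying $\mathrm{DP}_{v_1},\dots,\mathrm{DP}_{v_k}$ in this order ($F$ itself if $k=0$). A variable $v$ is singular for $F$ if $\min(\mathrm{ldeg}_F(v),\mathrm{ldeg}_F(\overline{v}))=1$, and $m$-singular ($m\ge1$) if moreover $\mathrm{vdeg}_F(v)-1=m$. For a minimally unsatisfiable $F$, a tuple $(v_1,\dots,v_n)$ is a singular tuple for $F$ if each $v_i$ is singular for $\mathrm{DP}_{v_1,\dots,v_{i-1}}(F)$; its singularity-degree tuple is $(m_1,\dots,m_n)$ where $v_i$ is $m_i$-singular for $\mathrm{DP}_{v_1,\dots,v_{i-1}}(F)$. A permutation $\pi$ is singularity-preserving for $F$ and $(v_1,\dots,v_n)$ if $(v_{\pi(1)},\dots,v_{\pi(n)})$ is also a singular tuple for $F$. *)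

theory Defs
  imports Main
begin

datatype 'v lit = Pos 'v | Neg 'v

fun comp :: "'v lit \<Rightarrow> 'v lit" where
  "comp (Pos v) = Neg v"
| "comp (Neg v) = Pos v"

fun var_of :: "'v lit \<Rightarrow> 'v" where
  "var_of (Pos v) = v"
| "var_of (Neg v) = v"

type_synonym 'v clause = "'v lit set"
type_synonym 'v clause_set = "'v clause set"

definition is_clause :: "'v clause \<Rightarrow> bool" where
  "is_clause C \<longleftrightarrow> finite C \<and> (\<forall>x\<in>C. comp x \<notin> C)"

definition is_clause_set :: "'v clause_set \<Rightarrow> bool" where
  "is_clause_set F \<longleftrightarrow> finite F \<and> (\<forall>C\<in>F. is_clause C)"

definition vars :: "'v clause \<Rightarrow> 'v set" where
  "vars C = var_of ` C"

fun lit_val :: "('v \<Rightarrow> bool) \<Rightarrow> 'v lit \<Rightarrow> bool" where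
  "lit_val \<phi> (Pos v) = \<phi> v"
| "lit_val \<phi> (Neg v) = (\<not> \<phi> v)"

definition satisfiable :: "'v clause_set \<Rightarrow> bool" where
  "satisfiable F \<longleftrightarrow> (\<exists>\<phi>. \<forall>C\<in>F. \<exists>x\<in>C. lit_val \<phi> x)"

definition min_unsat :: "'v clause_set \<Rightarrow> bool" where
  "min_unsat F \<longleftrightarrow> is_clause_set F \<and> \<not> satisfiable F \<and> (\<forall>G. G \<subset> F \<longrightarrow> satisfiable G)"

definition ldeg :: "'v clause_set \<Rightarrow> 'v lit \<Rightarrow> nat" where
  "ldeg F x = card {C \<in> F. x \<in> C}"

definition vdeg :: "'v clause_set \<Rightarrow> 'v \<Rightarrow> nat" where
  "vdeg F v = ldeg F (Pos v) + ldeg F (Neg v)"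

definition DP :: "'v \<Rightarrow> 'v clause_set \<Rightarrow> 'v clause_set" where
  "DP v F = {C \<in> F. v \<notin> vars C} \<union>
     {(C \<union> D) - {Pos v, Neg v} | C D. C \<in> F \<and> D \<in> F \<and> C \<inter> comp ` D = {Pos v}}"

definition DPs :: "'v clause_set \<Rightarrow> 'v list \<Rightarrow> 'v clause_set" where
  "DPs F vs = fold DP vs F"

definition singular :: "'v clause_set \<Rightarrow> 'v \<Rightarrow> bool" where
  "singular F v \<longleftrightarrow> min (ldeg F (Pos v)) (ldeg F (Neg v)) = 1"

definition m_singular :: "nat \<Rightarrow> 'v clause_set \<Rightarrow> 'v \<Rightarrow> bool" where
  "m_singular m F v \<longleftrightarrow> m \<ge> 1 \<and> singular F v \<and> vdeg F v - 1 = m"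

text \<open>Tuples are lists, indexed from 0: position j of the list is the paper's v_{j+1}.\<close>
definition singular_tuple :: "'v clause_set \<Rightarrow> 'v list \<Rightarrow> bool" where
  "singular_tuple F vs \<longleftrightarrow> min_unsat F \<and>
     (\<forall>j < length vs. singular (DPs F (take j vs)) (vs ! j))"

text \<open>Singularity degree at position j (meaningful when vs is a singular tuple).\<close>
definition sing_deg :: "'v clause_set \<Rightarrow> 'v list \<Rightarrow> nat \<Rightarrow> nat" where
  "sing_deg F vs j = vdeg (DPs F (take j vs)) (vs ! j) - 1"

end

theory Submission
  imports Defs
begin

lemma comp_comp[simp]: "comp (comp x) = x" by (cases x) auto
lemma var_comp[simp]: "var_of (comp x) = var_of x" by (cases x) auto
lemma comp_neq[simp]: "comp x \<noteq> x" by (cases x) auto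
lemma comp_neq2[simp]: "x \<noteq> comp x" by (cases x) auto
lemma comp_inj[simp]: "comp x = comp y \<longleftrightarrow> x = y" by (metis comp_comp)
lemma var_eq: "var_of z = var_of x \<Longrightarrow> z = x \<or> z = comp x"
  by (cases z; cases x) auto
lemma lit_val_comp[simp]: "lit_val \<phi> (comp x) = (\<not> lit_val \<phi> x)" by (cases x) auto
lemma in_vars: "v \<in> vars E \<longleftrightarrow> Pos v \<in> E \<or> Neg v \<in> E"
  unfolding vars_def by (auto simp: image_iff) (metis lit.exhaust var_of.simps)+

lemma lits_var: "{Pos (var_of x), Neg (var_of x)} = {x, comp x}"
  by (cases x) auto

definition flip :: "('v \<Rightarrow> bool) \<Rightarrow> 'v lit \<Rightarrow> ('v \<Rightarrow> bool)" where
  "flip \<phi> x = \<phi>(var_of x := (case x of Pos _ \<Rightarrow> False | Neg _ \<Rightarrow> True))"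

lemma flip_x[simp]: "lit_val (flip \<phi> x) x = False"
  by (cases x) (auto simp: flip_def)
lemma flip_other: "var_of z \<noteq> var_of x \<Longrightarrow> lit_val (flip \<phi> x) z = lit_val \<phi> z"
  by (cases z; cases x) (auto simp: flip_def)

lemma mu_clause: "min_unsat H \<Longrightarrow> E \<in> H \<Longrightarrow> is_clause E"
  by (auto simp: min_unsat_def is_clause_set_def)
lemma mu_finite: "min_unsat H \<Longrightarrow> finite H"
  by (auto simp: min_unsat_def is_clause_set_def)
lemma taut: "is_clause E \<Longrightarrow> z \<in> E \<Longrightarrow> comp z \<notin> E"
  by (auto simp: is_clause_def)
lemma mu_unsat: "min_unsat H \<Longrightarrow> \<forall>\<phi>. \<exists>E\<in>H. \<forall>z\<in>E. \<not> lit_val \<phi> z"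
  by (auto simp: min_unsat_def satisfiable_def)
lemma mu_remove: "min_unsat H \<Longrightarrow> E \<in> H \<Longrightarrow>
   \<exists>\<phi>. (\<forall>E'\<in>H-{E}. \<exists>z\<in>E'. lit_val \<phi> z) \<and> (\<forall>z\<in>E. \<not> lit_val \<phi> z)"
proof -
  assume mu: "min_unsat H" and E: "E \<in> H"
  then have "H - {E} \<subset> H" by auto
  with mu have "satisfiable (H - {E})" unfolding min_unsat_def by blast
  then obtain \<phi> where \<phi>: "\<forall>E'\<in>H-{E}. \<exists>z\<in>E'. lit_val \<phi> z"
    unfolding satisfiable_def by blast
  moreover have "\<forall>z\<in>E. \<not> lit_val \<phi> z"
    using mu_unsat[OF mu, rule_format, of \<phi>] \<phi> by blast
  ultimately show ?thesis by blast
qed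

lemma ldeg1_unique: "ldeg H x = 1 \<Longrightarrow> X \<in> H \<Longrightarrow> x \<in> X \<Longrightarrow> Y \<in> H \<Longrightarrow> x \<in> Y \<Longrightarrow> X = Y"
  unfolding ldeg_def by (metis (mono_tags, lifting) card_1_singletonE mem_Collect_eq singletonD)

lemma ldeg1_ex: "ldeg H x = 1 \<Longrightarrow> \<exists>C. C \<in> H \<and> x \<in> C"
  unfolding ldeg_def by (metis (mono_tags, lifting) card_1_singletonE mem_Collect_eq singletonI)

lemma key:
  assumes mu: "min_unsat H" and l: "ldeg H x = 1" and X: "X \<in> H" "x \<in> X"
    and Y: "Y \<in> H" "comp x \<in> Y"
  shows "\<exists>\<phi>. (\<forall>z\<in>X. \<not> lit_val \<phi> z) \<and> (\<forall>z\<in>Y-{comp x}. \<not> lit_val \<phi> z)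
      \<and> (\<forall>E\<in>H-{X,Y}. \<exists>z\<in>E. var_of z \<noteq> var_of x \<and> lit_val \<phi> z)"
proof -
  obtain \<phi>0 where s: "\<forall>E'\<in>H-{Y}. \<exists>z\<in>E'. lit_val \<phi>0 z" and f: "\<forall>z\<in>Y. \<not> lit_val \<phi>0 z"
    using mu_remove[OF mu Y(1)] by blast
  define \<phi> where "\<phi> = flip \<phi>0 x"
  have cY: "is_clause Y" "is_clause X" using mu X Y mu_clause by auto
  have A: "\<forall>z\<in>Y-{comp x}. \<not> lit_val \<phi> z"
  proof
    fix z assume z: "z \<in> Y - {comp x}"
    then have "z \<noteq> x" using taut[OF cY(1) Y(2)] by auto
    then have "var_of z \<noteq> var_of x" using z var_eq by blast
    then show "\<not> lit_val \<phi> z" using f z by (simp add: flip_other \<phi>_def)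
  qed
  have B: "\<forall>E\<in>H-{X,Y}. \<exists>z\<in>E. var_of z \<noteq> var_of x \<and> lit_val \<phi> z"
  proof
    fix E assume E: "E \<in> H - {X,Y}"
    then obtain z where z: "z \<in> E" "lit_val \<phi>0 z" using s by blast
    have "z \<noteq> x" using ldeg1_unique[OF l X, of E] E z by blast
    moreover have "z \<noteq> comp x" using f Y z by auto
    ultimately have "var_of z \<noteq> var_of x" using var_eq by blast
    then show "\<exists>z\<in>E. var_of z \<noteq> var_of x \<and> lit_val \<phi> z"
      using z by (intro bexI[of _ z]) (simp_all add: flip_other \<phi>_def)
  qed
  have C: "\<forall>z\<in>X. \<not> lit_val \<phi> z"
  proof (rule ccontr)
    assume "\<not> ?thesis"
    then obtain z where z: "z \<in> X" "lit_val \<phi> z" by blast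
    have "\<forall>E\<in>H. \<exists>z\<in>E. lit_val \<phi> z"
    proof
      fix E assume "E \<in> H"
      show "\<exists>z\<in>E. lit_val \<phi> z"
      proof (cases "E = X")
        case True then show ?thesis using z by blast
      next
        case False
        show ?thesis
        proof (cases "E = Y")
          case True then show ?thesis using Y(2) by (intro bexI[of _ "comp x"]) (simp_all add: \<phi>_def)
        next
          case False
          then show ?thesis using B \<open>E \<in> H\<close> \<open>E \<noteq> X\<close> by blast
        qed
      qed
    qed
    moreover obtain E0 where "E0 \<in> H" "\<forall>z\<in>E0. \<not> lit_val \<phi> z"
      using mu_unsat[OF mu] by blast
    ultimately show False by blast
  qed
  show ?thesis using A B C by blast
qed

lemma clash:
  assumes mu: "min_unsat H" and l: "ldeg H x = 1" and X: "X \<in> H" "x \<in> X"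
    and Y: "Y \<in> H" "comp x \<in> Y"
  shows "X \<inter> comp ` Y = {x}"
proof -
  obtain \<phi> where A: "\<forall>z\<in>X. \<not> lit_val \<phi> z" and B: "\<forall>z\<in>Y-{comp x}. \<not> lit_val \<phi> z"
    using key[OF assms] by blast
  have "y = x" if "y \<in> X" "comp y \<in> Y" for y
  proof (rule ccontr)
    assume "y \<noteq> x"
    then have "comp y \<in> Y - {comp x}" using that by simp
    then have "\<not> lit_val \<phi> (comp y)" using B by blast
    then show False using A that by simp
  qed
  moreover have "x \<in> comp ` Y" using Y(2) by (metis comp_comp image_eqI)
  ultimately show ?thesis using X(2) by (auto simp: image_iff)
qed


lemma clash_mem: "C \<inter> comp ` D = {y} \<Longrightarrow> y \<in> C \<and> comp y \<in> D"
proof -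
  assume h: "C \<inter> comp ` D = {y}"
  then have "y \<in> C" "y \<in> comp ` D" by auto
  then obtain d where "d \<in> D" "y = comp d" by blast
  then show ?thesis using \<open>y \<in> C\<close> by simp
qed

lemma in_comp_image: "z \<in> comp ` D \<longleftrightarrow> comp z \<in> D"
  by (metis comp_comp image_eqI imageE)

lemma clash_swap: "C \<inter> comp ` D = {y} \<Longrightarrow> D \<inter> comp ` C = {comp y}"
  unfolding set_eq_iff in_comp_image Int_iff singleton_iff
  by (metis comp_comp)

lemma upd_other: "var_of z \<noteq> v \<Longrightarrow> lit_val (\<phi>(v:=b)) z = lit_val \<phi> z"
  by (cases z) auto

lemma notin_vars_lit: "var_of z \<notin> vars E \<Longrightarrow> z \<notin> E"
  unfolding vars_def by auto

lemma mem_DP_lit: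
  assumes mu: "min_unsat H" and l: "ldeg H x = 1"
  shows "E \<in> DP (var_of x) H \<longleftrightarrow> (E \<in> H \<and> var_of x \<notin> vars E) \<or>
     (\<exists>X Y. X \<in> H \<and> Y \<in> H \<and> x \<in> X \<and> comp x \<in> Y \<and> E = X \<union> Y - {x, comp x})"
    (is "?L \<longleftrightarrow> ?R")
proof
  assume ?L
  then consider "E \<in> H \<and> var_of x \<notin> vars E"
    | C D where "C \<in> H" "D \<in> H" "C \<inter> comp ` D = {Pos (var_of x)}"
        "E = C \<union> D - {Pos (var_of x), Neg (var_of x)}"
    unfolding DP_def by blast
  then show ?R
  proof cases
    case 1 then show ?thesis by blast
  next
    case 2
    note cm = clash_mem[OF 2(3)]
    show ?thesis
    proof (cases x)
      case (Pos v)
      have "E = C \<union> D - {x, comp x}" using 2 Pos by simp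
      then show ?thesis using 2 cm Pos by (intro disjI2 exI[of _ C] exI[of _ D]) simp
    next
      case (Neg v)
      then have "E = D \<union> C - {x, comp x}" using 2 by auto
      then show ?thesis using 2 cm Neg by (intro disjI2 exI[of _ D] exI[of _ C]) simp
    qed
  qed
next
  assume ?R
  then consider "E \<in> H \<and> var_of x \<notin> vars E"
    | X Y where "X \<in> H" "Y \<in> H" "x \<in> X" "comp x \<in> Y" "E = X \<union> Y - {x, comp x}"
    by blast
  then show ?L
  proof cases
    case 1 then show ?thesis unfolding DP_def by blast
  next
    case 2
    have cl: "X \<inter> comp ` Y = {x}" using clash[OF mu l 2(1,3,2,4)] .
    show ?thesis
    proof (cases x)
      case (Pos v)
      have "E = X \<union> Y - {Pos v, Neg v}" using 2 Pos by simp
      then have "E \<in> {(C \<union> D) - {Pos v, Neg v} | C D. C \<in> H \<and> D \<in> H \<and> C \<inter> comp ` D = {Pos v}}"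
        using 2 cl Pos by blast
      then show ?thesis using Pos unfolding DP_def by simp
    next
      case (Neg v)
      have "Y \<inter> comp ` X = {Pos v}" using clash_swap[OF cl] Neg by simp
      moreover have "E = Y \<union> X - {Pos v, Neg v}" using 2 Neg by auto
      ultimately have "E \<in> {(C \<union> D) - {Pos v, Neg v} | C D. C \<in> H \<and> D \<in> H \<and> C \<inter> comp ` D = {Pos v}}"
        using 2 by blast
      then show ?thesis using Neg unfolding DP_def by simp
    qed
  qed
qed

lemma DP_no_var: "E \<in> DP v H \<Longrightarrow> v \<notin> vars E"
  unfolding DP_def by (auto simp: in_vars)

lemma res_clause:
  assumes "is_clause C" "is_clause D" "C \<inter> comp ` D = {y}"
  shows "is_clause (C \<union> D - {y, comp y})"
  unfolding is_clause_def
proof (intro conjI ballI)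
  show "finite (C \<union> D - {y, comp y})" using assms by (auto simp: is_clause_def)
  fix z assume z: "z \<in> C \<union> D - {y, comp y}"
  show "comp z \<notin> C \<union> D - {y, comp y}"
  proof
    assume cz: "comp z \<in> C \<union> D - {y, comp y}"
    consider "z \<in> C" "comp z \<in> C" | "z \<in> C" "comp z \<in> D" | "z \<in> D" "comp z \<in> C" | "z \<in> D" "comp z \<in> D"
      using z cz by blast
    then show False
    proof cases
      case 1 then show ?thesis using assms(1) taut by blast
    next
      case 2
      then have "z \<in> C \<inter> comp ` D" by (simp add: in_comp_image)
      then have "z = y" using assms(3) by blast
      then show ?thesis using z by blast
    next
      case 3
      then have "comp z \<in> C \<inter> comp ` D" by (simp add: in_comp_image)
      then have "comp z = y" using assms(3) by blast
      then have "z = comp y" by (metis comp_comp)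
      then show ?thesis using z by blast
    next
      case 4 then show ?thesis using assms(2) taut by blast
    qed
  qed
qed

lemma DP_clause_set:
  assumes "is_clause_set H" shows "is_clause_set (DP v H)"
proof -
  have "DP v H \<subseteq> H \<union> (\<lambda>(C,D). C \<union> D - {Pos v, Neg v}) ` (H \<times> H)"
    unfolding DP_def by auto
  then have fin: "finite (DP v H)" using assms
    by (meson finite_SigmaI finite_Un finite_imageI finite_subset is_clause_set_def)
  have "is_clause E" if "E \<in> DP v H" for E
  proof -
    from that consider "E \<in> H"
      | C D where "C \<in> H" "D \<in> H" "C \<inter> comp ` D = {Pos v}" "E = C \<union> D - {Pos v, Neg v}"
      unfolding DP_def by blast
    then show ?thesis
    proof cases
      case 1 then show ?thesis using assms by (auto simp: is_clause_set_def)
    next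
      case 2
      have "is_clause C" "is_clause D" using 2 assms by (auto simp: is_clause_set_def)
      then have "is_clause (C \<union> D - {Pos v, comp (Pos v)})"
        using res_clause 2 by blast
      then show ?thesis using 2 by simp
    qed
  qed
  then show ?thesis using fin by (auto simp: is_clause_set_def)
qed

lemma DP_unsat:
  assumes cs: "is_clause_set H" and u: "\<not> satisfiable H"
  shows "\<not> satisfiable (DP v H)"
proof
  assume "satisfiable (DP v H)"
  then obtain \<phi> where \<phi>: "\<forall>E\<in>DP v H. \<exists>z\<in>E. lit_val \<phi> z" unfolding satisfiable_def by blast
  obtain E1 where E1: "E1 \<in> H" "\<forall>z\<in>E1. \<not> lit_val (\<phi>(v:=True)) z"
    using u unfolding satisfiable_def by blast
  obtain E0 where E0: "E0 \<in> H" "\<forall>z\<in>E0. \<not> lit_val (\<phi>(v:=False)) z"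
    using u unfolding satisfiable_def by blast
  have "v \<in> vars E1"
  proof (rule ccontr)
    assume "v \<notin> vars E1"
    then have "E1 \<in> DP v H" using E1 unfolding DP_def by blast
    then obtain z where "z \<in> E1" "lit_val \<phi> z" using \<phi> by blast
    moreover have "var_of z \<noteq> v" using \<open>v \<notin> vars E1\<close> \<open>z \<in> E1\<close> unfolding vars_def by auto
    ultimately show False using E1 upd_other by metis
  qed
  then have N1: "Neg v \<in> E1" using E1 by (auto simp: in_vars)
  have "v \<in> vars E0"
  proof (rule ccontr)
    assume "v \<notin> vars E0"
    then have "E0 \<in> DP v H" using E0 unfolding DP_def by blast
    then obtain z where "z \<in> E0" "lit_val \<phi> z" using \<phi> by blast
    moreover have "var_of z \<noteq> v" using \<open>v \<notin> vars E0\<close> \<open>z \<in> E0\<close> unfolding vars_def by auto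
    ultimately show False using E0 upd_other by metis
  qed
  then have P0: "Pos v \<in> E0" using E0 by (auto simp: in_vars)
  have c0: "is_clause E0" "is_clause E1" using cs E0 E1 by (auto simp: is_clause_set_def)
  show False
  proof (cases "E0 \<inter> comp ` E1 = {Pos v}")
    case True
    then have "E0 \<union> E1 - {Pos v, Neg v} \<in> DP v H" using E0 E1 unfolding DP_def by blast
    then obtain z where z: "z \<in> E0 \<union> E1 - {Pos v, Neg v}" "lit_val \<phi> z" using \<phi> by blast
    then have "var_of z \<noteq> v" by (cases z) auto
    then show False using z E0 E1 upd_other by (metis DiffD1 UnE)
  next
    case False
    have "Pos v \<in> E0 \<inter> comp ` E1" using P0 N1 by (metis IntI comp.simps(2) image_eqI)
    then obtain y where y: "y \<in> E0" "comp y \<in> E1" "y \<noteq> Pos v" using False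
      by (auto simp: set_eq_iff image_iff)
    have "y \<noteq> Neg v" using taut[OF c0(1) P0] y by auto
    then have "var_of y \<noteq> v" using y(3) by (cases y) auto
    then show False using y E0 E1 upd_other by (metis lit_val_comp var_comp)
  qed
qed

lemma sat_mono: "satisfiable F \<Longrightarrow> G \<subseteq> F \<Longrightarrow> satisfiable G"
  unfolding satisfiable_def by blast

lemma DP_MU:
  assumes mu: "min_unsat H" and l: "ldeg H x = 1"
  shows "min_unsat (DP (var_of x) H)"
proof -
  let ?v = "var_of x"
  have mu1: "is_clause_set H" "\<not> satisfiable H" using mu unfolding min_unsat_def by blast+
  have cs: "is_clause_set (DP ?v H)" by (rule DP_clause_set[OF mu1(1)])
  have un: "\<not> satisfiable (DP ?v H)" by (rule DP_unsat[OF mu1])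
  have rm: "satisfiable (DP ?v H - {E})" if E: "E \<in> DP ?v H" for E
  proof (cases "E \<in> H \<and> ?v \<notin> vars E")
    case True
    obtain \<phi> where s: "\<forall>E'\<in>H-{E}. \<exists>z\<in>E'. lit_val \<phi> z" using mu_remove[OF mu] True by blast
    have "\<exists>z\<in>E'. lit_val \<phi> z" if E': "E' \<in> DP ?v H - {E}" for E'
    proof -
      have "E' \<in> DP ?v H" "E' \<noteq> E" using E' by auto
      then consider "E' \<in> H" "E' \<noteq> E"
        | X Y where "X \<in> H" "Y \<in> H" "x \<in> X" "comp x \<in> Y" "E' = X \<union> Y - {x, comp x}"
        unfolding mem_DP_lit[OF mu l] by blast
      then show ?thesis
      proof cases
        case 1 then show ?thesis using s by blast
      next
        case 2
        have "x \<notin> E" "comp x \<notin> E" using notin_vars_lit[of x E] notin_vars_lit[of "comp x" E] True by simp_all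
        then have "X \<noteq> E" "Y \<noteq> E" using 2 by auto
        then have "X \<in> H - {E}" "Y \<in> H - {E}" using 2 by simp_all
        then obtain z1 z2 where z: "z1 \<in> X" "lit_val \<phi> z1" "z2 \<in> Y" "lit_val \<phi> z2"
          using s by meson
        have cX: "is_clause X" "is_clause Y" using mu_clause[OF mu 2(1)] mu_clause[OF mu 2(2)] by simp_all
        show ?thesis
        proof (cases "z1 = x")
          case False
          have "z1 \<noteq> comp x" using taut[OF cX(1) 2(3)] z by auto
          then show ?thesis using False z 2 by blast
        next
          case True
          have "z2 \<noteq> comp x" using True z by auto
          moreover have "z2 \<noteq> x" using taut[OF cX(2) 2(4)] z by auto
          ultimately show ?thesis using z 2 by blast
        qed
      qed
    qed
    then show ?thesis unfolding satisfiable_def by blast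
  next
    case False
    then obtain X0 Y0 where XY: "X0 \<in> H" "Y0 \<in> H" "x \<in> X0" "comp x \<in> Y0"
      "E = X0 \<union> Y0 - {x, comp x}" using E unfolding mem_DP_lit[OF mu l] by blast
    obtain \<phi> where B: "\<forall>E\<in>H-{X0,Y0}. \<exists>z\<in>E. var_of z \<noteq> var_of x \<and> lit_val \<phi> z"
      using key[OF mu l XY(1,3,2,4)] by blast
    have "\<exists>z\<in>E'. lit_val \<phi> z" if E': "E' \<in> DP ?v H - {E}" for E'
    proof -
      have "E' \<in> DP ?v H" using E' by auto
      then consider "E' \<in> H" "?v \<notin> vars E'"
        | X Y where "X \<in> H" "Y \<in> H" "x \<in> X" "comp x \<in> Y" "E' = X \<union> Y - {x, comp x}"
        unfolding mem_DP_lit[OF mu l] by blast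
      then show ?thesis
      proof cases
        case 1
        have "x \<notin> E'" "comp x \<notin> E'" using notin_vars_lit[of x E'] notin_vars_lit[of "comp x" E'] 1 by simp_all
        then have "E' \<in> H - {X0, Y0}" using 1 XY by auto
        then show ?thesis using B by blast
      next
        case 2
        have "X = X0" using ldeg1_unique[OF l] 2 XY by blast
        then have "Y \<noteq> Y0" using 2 XY E' by auto
        moreover have "Y \<noteq> X0" using taut[OF mu_clause[OF mu XY(1)] XY(3)] 2 by auto
        ultimately obtain z where "z \<in> Y" "var_of z \<noteq> var_of x" "lit_val \<phi> z"
          using B 2 by blast
        moreover then have "z \<noteq> x" "z \<noteq> comp x" by auto
        ultimately show ?thesis using 2 by blast
      qed
    qed
    then show ?thesis unfolding satisfiable_def by blast
  qed
  have "satisfiable G" if "G \<subset> DP ?v H" for G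
  proof -
    from that obtain E where E: "E \<in> DP ?v H" "E \<notin> G" by (meson psubset_imp_ex_mem DiffE)
    have "G \<subseteq> DP ?v H - {E}" using that E by auto
    then show ?thesis using rm[OF E(1)] sat_mono by meson
  qed
  then show ?thesis using cs un unfolding min_unsat_def by (intro conjI allI impI) auto
qed

lemma sing_lit: "singular H v \<Longrightarrow> \<exists>x. var_of x = v \<and> ldeg H x = 1 \<and> ldeg H (comp x) \<ge> 1"
  unfolding singular_def
  by (metis comp.simps(1) comp.simps(2) le_refl min.commute min_def not_less_eq_eq one_add_one plus_1_eq_Suc var_of.simps(1) var_of.simps(2) nat_le_linear min_absorb1)

lemma vdeg_lit: "vdeg H (var_of x) = ldeg H x + ldeg H (comp x)"
  by (cases x) (auto simp: vdeg_def)

lemma DP_MU_sing: "min_unsat H \<Longrightarrow> singular H v \<Longrightarrow> min_unsat (DP v H)"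
  using sing_lit DP_MU by metis


lemma in_vars_lit: "var_of x \<in> vars E \<longleftrightarrow> x \<in> E \<or> comp x \<in> E"
  by (cases x) (auto simp: in_vars)

lemma DP_struct:
  assumes mu: "min_unsat G" and l: "ldeg G x = 1" and C: "C \<in> G" "x \<in> C"
  shows "DP (var_of x) G = (G - insert C {D \<in> G. comp x \<in> D}) \<union>
           (\<lambda>D. C \<union> D - {x, comp x}) ` {D \<in> G. comp x \<in> D}"
proof (rule set_eqI)
  fix E
  have cC: "is_clause C" using mu_clause[OF mu C(1)] .
  have a: "(E \<in> G \<and> var_of x \<notin> vars E) \<longleftrightarrow> E \<in> G - insert C {D \<in> G. comp x \<in> D}"
  proof
    assume h: "E \<in> G \<and> var_of x \<notin> vars E"
    then have "x \<notin> E" "comp x \<notin> E" by (simp_all add: in_vars_lit)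
    then show "E \<in> G - insert C {D \<in> G. comp x \<in> D}" using h C by auto
  next
    assume h: "E \<in> G - insert C {D \<in> G. comp x \<in> D}"
    then have "comp x \<notin> E" "E \<noteq> C" "E \<in> G" by auto
    moreover have "x \<notin> E"
    proof
      assume "x \<in> E" then have "E = C" using ldeg1_unique[OF l \<open>E \<in> G\<close> _ C] by simp
      then show False using \<open>E \<noteq> C\<close> by simp
    qed
    ultimately show "E \<in> G \<and> var_of x \<notin> vars E" by (simp add: in_vars_lit)
  qed
  have b: "(\<exists>X Y. X \<in> G \<and> Y \<in> G \<and> x \<in> X \<and> comp x \<in> Y \<and> E = X \<union> Y - {x, comp x})
      \<longleftrightarrow> E \<in> (\<lambda>D. C \<union> D - {x, comp x}) ` {D \<in> G. comp x \<in> D}"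
  proof
    assume "\<exists>X Y. X \<in> G \<and> Y \<in> G \<and> x \<in> X \<and> comp x \<in> Y \<and> E = X \<union> Y - {x, comp x}"
    then obtain X Y where XY: "X \<in> G" "Y \<in> G" "x \<in> X" "comp x \<in> Y" "E = X \<union> Y - {x, comp x}"
      by blast
    have "X = C" using ldeg1_unique[OF l XY(1,3) C] .
    then show "E \<in> (\<lambda>D. C \<union> D - {x, comp x}) ` {D \<in> G. comp x \<in> D}" using XY by blast
  next
    assume "E \<in> (\<lambda>D. C \<union> D - {x, comp x}) ` {D \<in> G. comp x \<in> D}"
    then obtain D where "D \<in> G" "comp x \<in> D" "E = C \<union> D - {x, comp x}" by blast
    then show "\<exists>X Y. X \<in> G \<and> Y \<in> G \<and> x \<in> X \<and> comp x \<in> Y \<and> E = X \<union> Y - {x, comp x}"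
      using C by blast
  qed
  show "E \<in> DP (var_of x) G \<longleftrightarrow> E \<in> (G - insert C {D \<in> G. comp x \<in> D}) \<union>
           (\<lambda>D. C \<union> D - {x, comp x}) ` {D \<in> G. comp x \<in> D}"
    unfolding mem_DP_lit[OF mu l] a b by simp
qed

lemma res_notin:
  assumes mu: "min_unsat G" and l: "ldeg G x = 1" and C: "C \<in> G" "x \<in> C"
    and D: "D \<in> G" "comp x \<in> D"
  shows "C \<union> D - {x, comp x} \<notin> G"
proof
  assume R: "C \<union> D - {x, comp x} \<in> G"
  obtain \<phi> where A: "\<forall>z\<in>C. \<not> lit_val \<phi> z" and B: "\<forall>z\<in>D-{comp x}. \<not> lit_val \<phi> z"
    and O: "\<forall>E\<in>G-{C,D}. \<exists>z\<in>E. var_of z \<noteq> var_of x \<and> lit_val \<phi> z"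
    using key[OF mu l C D] by blast
  have "C \<union> D - {x, comp x} \<noteq> C" using C(2) by blast
  moreover have "C \<union> D - {x, comp x} \<noteq> D" using D(2) by blast
  ultimately have "C \<union> D - {x, comp x} \<in> G - {C, D}" using R by simp
  then obtain z where z: "z \<in> C \<union> D - {x, comp x}" "lit_val \<phi> z" using O by meson
  then show False using A B by blast
qed

lemma res_inj:
  assumes mu: "min_unsat G" and l: "ldeg G x = 1" and C: "C \<in> G" "x \<in> C"
  shows "inj_on (\<lambda>D. C \<union> D - {x, comp x}) {D \<in> G. comp x \<in> D}"
proof (rule inj_onI)
  fix D1 D2 assume D1: "D1 \<in> {D \<in> G. comp x \<in> D}" and D2: "D2 \<in> {D \<in> G. comp x \<in> D}"
    and eq: "C \<union> D1 - {x, comp x} = C \<union> D2 - {x, comp x}"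
  show "D1 = D2"
  proof (rule ccontr)
    assume ne: "D1 \<noteq> D2"
    have D1': "D1 \<in> G" "comp x \<in> D1" using D1 by auto
    obtain \<phi> where A: "\<forall>z\<in>C. \<not> lit_val \<phi> z" and B: "\<forall>z\<in>D1-{comp x}. \<not> lit_val \<phi> z"
      and O: "\<forall>E\<in>G-{C,D1}. \<exists>z\<in>E. var_of z \<noteq> var_of x \<and> lit_val \<phi> z"
      using key[OF mu l C D1'] by blast
    have "D2 \<noteq> C" using D2 taut[OF mu_clause[OF mu C(1)] C(2)] by auto
    then have "D2 \<in> G - {C, D1}" using D2 ne by auto
    then obtain z where z: "z \<in> D2" "var_of z \<noteq> var_of x" "lit_val \<phi> z" using O by meson
    then have "z \<in> C \<union> D2 - {x, comp x}" by auto
    then have "z \<in> C \<union> D1 - {x, comp x}" using eq by simp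
    then show False using A B z by blast
  qed
qed

lemma deg:
  assumes mu: "min_unsat G" and l: "ldeg G x = 1" and C: "C \<in> G" "x \<in> C"
    and y: "var_of y \<noteq> var_of x"
  shows "y \<in> C \<Longrightarrow> ldeg (DP (var_of x) G) y + 1 + card {D \<in> G. comp x \<in> D \<and> y \<in> D}
            = ldeg G y + ldeg G (comp x)"
    and "y \<notin> C \<Longrightarrow> ldeg (DP (var_of x) G) y = ldeg G y"
proof -
  define A where "A = {D \<in> G. comp x \<in> D}"
  define f where "f = (\<lambda>D. C \<union> D - {x, comp x})"
  have fin: "finite G" using mu_finite[OF mu] .
  have finA: "finite A" unfolding A_def using fin by simp
  have st: "DP (var_of x) G = (G - insert C A) \<union> f ` A"
    unfolding A_def f_def using DP_struct[OF mu l C] .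
  have inj: "inj_on f A" unfolding A_def f_def using res_inj[OF mu l C] .
  have notin: "D \<in> A \<Longrightarrow> f D \<notin> G" for D unfolding A_def f_def using res_notin[OF mu l C] by blast
  have CA: "C \<notin> A" unfolding A_def using taut[OF mu_clause[OF mu C(1)] C(2)] by simp
  have yx: "y \<noteq> x" "y \<noteq> comp x" using y by auto
  have fy: "y \<in> f D \<longleftrightarrow> y \<in> C \<or> y \<in> D" for D unfolding f_def using yx by auto
  define n0 where "n0 = card {E \<in> G - insert C A. y \<in> E}"
  have s1: "{E \<in> DP (var_of x) G. y \<in> E} = {E \<in> G - insert C A. y \<in> E} \<union> f ` {D \<in> A. y \<in> f D}"
    unfolding st by auto
  have disj: "{E \<in> G - insert C A. y \<in> E} \<inter> f ` {D \<in> A. y \<in> f D} = {}"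
    using notin by auto
  have c1: "ldeg (DP (var_of x) G) y = n0 + card {D \<in> A. y \<in> f D}"
  proof -
    have "ldeg (DP (var_of x) G) y = card ({E \<in> G - insert C A. y \<in> E} \<union> f ` {D \<in> A. y \<in> f D})"
      unfolding ldeg_def s1 ..
    also have "\<dots> = n0 + card (f ` {D \<in> A. y \<in> f D})"
      unfolding n0_def using fin finA disj by (intro card_Un_disjoint) auto
    also have "card (f ` {D \<in> A. y \<in> f D}) = card {D \<in> A. y \<in> f D}"
      using inj by (intro card_image) (auto intro: inj_on_subset)
    finally show ?thesis .
  qed
  have s2: "{E \<in> G. y \<in> E} = {E \<in> G - insert C A. y \<in> E} \<union> ({E \<in> {C}. y \<in> E} \<union> {D \<in> A. y \<in> D})"
    using C(1) unfolding A_def by auto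
  have c2: "ldeg G y = n0 + (card {E \<in> {C}. y \<in> E} + card {D \<in> A. y \<in> D})"
  proof -
    have "ldeg G y = card ({E \<in> G - insert C A. y \<in> E} \<union> ({E \<in> {C}. y \<in> E} \<union> {D \<in> A. y \<in> D}))"
      unfolding ldeg_def s2 ..
    also have "\<dots> = n0 + card ({E \<in> {C}. y \<in> E} \<union> {D \<in> A. y \<in> D})"
      unfolding n0_def using fin finA by (intro card_Un_disjoint) auto
    also have "card ({E \<in> {C}. y \<in> E} \<union> {D \<in> A. y \<in> D}) = card {E \<in> {C}. y \<in> E} + card {D \<in> A. y \<in> D}"
      using finA CA by (intro card_Un_disjoint) auto
    finally show ?thesis .
  qed
  have cA: "ldeg G (comp x) = card A" unfolding ldeg_def A_def ..
  have dA: "{D \<in> G. comp x \<in> D \<and> y \<in> D} = {D \<in> A. y \<in> D}" unfolding A_def by auto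
  show "y \<in> C \<Longrightarrow> ldeg (DP (var_of x) G) y + 1 + card {D \<in> G. comp x \<in> D \<and> y \<in> D}
            = ldeg G y + ldeg G (comp x)"
  proof -
    assume yC: "y \<in> C"
    have "{D \<in> A. y \<in> f D} = A" using fy yC by auto
    moreover have "{E \<in> {C}. y \<in> E} = {C}" using yC by auto
    ultimately show ?thesis using c1 c2 cA dA by simp
  qed
  show "y \<notin> C \<Longrightarrow> ldeg (DP (var_of x) G) y = ldeg G y"
  proof -
    assume yC: "y \<notin> C"
    have "{D \<in> A. y \<in> f D} = {D \<in> A. y \<in> D}" using fy yC by auto
    moreover have "{E \<in> {C}. y \<in> E} = {}" using yC by auto
    ultimately show ?thesis using c1 c2 by simp
  qed
qed


lemma sing_iff_lit: "singular H (var_of y) \<longleftrightarrow> min (ldeg H y) (ldeg H (comp y)) = 1"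
  by (cases y) (auto simp: singular_def min.commute)

lemma card_bound: "finite T \<Longrightarrow> insert C S \<subseteq> T \<Longrightarrow> C \<notin> S \<Longrightarrow> card S + 1 \<le> card T"
proof -
  assume T: "finite T" and s: "insert C S \<subseteq> T" and c: "C \<notin> S"
  have "S \<subseteq> T" using s by simp
  then have fS: "finite S" using T by (rule finite_subset)
  have "card (insert C S) = card S + 1" using fS c by simp
  moreover have "card (insert C S) \<le> card T" using card_mono[OF T s] .
  ultimately show ?thesis by simp
qed

lemma sing_occ: "singular H u \<Longrightarrow> \<exists>E\<in>H. u \<in> vars E"
proof -
  assume "singular H u"
  from sing_lit[OF this] obtain x where x: "var_of x = u" "ldeg H x = 1" by blast
  from ldeg1_ex[OF x(2)] obtain E where "E \<in> H" "x \<in> E" by blast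
  moreover then have "u \<in> vars E" using x(1) unfolding vars_def by (metis image_eqI)
  ultimately show ?thesis by (intro bexI)
qed

lemma sing_DP_neq: "singular (DP v G) w \<Longrightarrow> w \<noteq> v"
proof
  assume "singular (DP v G) w" "w = v"
  from sing_occ[OF this(1)] obtain E where "E \<in> DP v G" "w \<in> vars E" by blast
  then show False using DP_no_var[OF \<open>E \<in> DP v G\<close>] \<open>w = v\<close> by simp
qed

lemma main_local:
  assumes mu: "min_unsat G" and sv: "singular G v" and sw: "singular (DP v G) w"
  defines "a \<equiv> vdeg G v - 1" and "b \<equiv> vdeg (DP v G) w - 1"
    and "m1 \<equiv> vdeg G w - 1" and "m2 \<equiv> vdeg (DP w G) v - 1"
  shows "(a \<ge> 2 \<longrightarrow> singular G w \<and> singular (DP w G) v \<and> m1 \<le> b + 1 \<and> m2 \<ge> a - 1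
              \<and> (b = 1 \<longrightarrow> m1 = 1) \<and> (b \<ge> 2 \<longrightarrow> m2 \<ge> 2))
         \<and> (a = 1 \<longrightarrow> (b = 1 \<longrightarrow> singular G w \<and> singular (DP w G) v \<and> m2 = 1 \<and> m1 \<in> {1,2})
              \<and> (b \<ge> 2 \<longrightarrow> singular G w \<longrightarrow> singular (DP w G) v \<and> m1 \<ge> 2))"
proof -
  have vw: "w \<noteq> v" using sing_DP_neq[OF sw] .
  have fin: "finite G" using mu_finite[OF mu] .
  obtain x where x: "var_of x = v" "ldeg G x = 1" "ldeg G (comp x) \<ge> 1" using sing_lit[OF sv] by blast
  obtain C where C: "C \<in> G" "x \<in> C" using ldeg1_ex[OF x(2)] by blast
  have cC: "is_clause C" using mu_clause[OF mu C(1)] .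
  have aeq: "a = ldeg G (comp x)" unfolding a_def using vdeg_lit[of G x] x by simp
  have m2eq: "m2 = ldeg (DP w G) x + ldeg (DP w G) (comp x) - 1"
    unfolding m2_def using vdeg_lit[of "DP w G" x] x by simp
  have sing2: "singular (DP w G) v \<longleftrightarrow> min (ldeg (DP w G) x) (ldeg (DP w G) (comp x)) = 1"
    using sing_iff_lit[of "DP w G" x] x by simp
  note degv = deg[OF mu x(2) C, unfolded x(1)]
  show ?thesis
  proof (cases "\<exists>y. var_of y = w \<and> y \<in> C")
    case False
    then have nP: "Pos w \<notin> C" "Neg w \<notin> C" by (metis var_of.simps)+
    have e1: "ldeg (DP v G) (Pos w) = ldeg G (Pos w)" using degv(2)[of "Pos w"] nP vw by simp
    have e2: "ldeg (DP v G) (Neg w) = ldeg G (Neg w)" using degv(2)[of "Neg w"] nP vw by simp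
    have sG: "singular G w" using sw unfolding singular_def e1 e2 .
    have vdw: "vdeg G w = vdeg (DP v G) w" unfolding vdeg_def e1 e2 ..
    obtain q where q: "var_of q = w" "ldeg G q = 1" "ldeg G (comp q) \<ge> 1" using sing_lit[OF sG] by blast
    obtain C' where C': "C' \<in> G" "q \<in> C'" using ldeg1_ex[OF q(2)] by blast
    have beq: "b = ldeg G (comp q)" unfolding b_def using vdw vdeg_lit[of G q] q by simp
    have m1eq: "m1 = b" unfolding m1_def b_def vdw ..
    have qC: "q \<notin> C" using False q by blast
    have xC': "x \<notin> C'"
    proof
      assume "x \<in> C'" then have "C' = C" using ldeg1_unique[OF x(2) C'(1) _ C] by simp
      then show False using qC C' by simp
    qed
    note degw = deg[OF mu q(2) C', unfolded q(1)]
    have xw: "var_of x \<noteq> w" using x vw by simp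
    have l2x: "ldeg (DP w G) x = 1" using degw(2)[OF xw xC'] x by simp
    have m2c: "m2 = a \<or> (\<exists>d. m2 + 1 + d = a + b \<and> d + 1 \<le> a \<and> d \<le> b)"
    proof (cases "comp x \<in> C'")
      case True
      define d where "d = card {D \<in> G. comp q \<in> D \<and> comp x \<in> D}"
      have h: "ldeg (DP w G) (comp x) + 1 + d = a + b"
        using degw(1)[of "comp x"] xw True unfolding d_def aeq beq by simp
      have "d + 1 \<le> a" unfolding d_def aeq ldeg_def
      proof (rule card_bound[OF _ _ ])
        show "finite {C \<in> G. comp x \<in> C}" using fin by simp
        show "insert C' {D \<in> G. comp q \<in> D \<and> comp x \<in> D} \<subseteq> {C \<in> G. comp x \<in> C}"
          using C' True by auto
        show "C' \<notin> {D \<in> G. comp q \<in> D \<and> comp x \<in> D}"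
          using taut[OF mu_clause[OF mu C'(1)] C'(2)] by simp
      qed
      moreover have "d \<le> b" unfolding d_def beq ldeg_def
        using fin by (intro card_mono) auto
      ultimately show ?thesis using h m2eq l2x by auto
    next
      case False
      then have "ldeg (DP w G) (comp x) = a" using degw(2)[of "comp x"] xw aeq by simp
      then show ?thesis using m2eq l2x by simp
    qed
    have a1: "a \<ge> 1" using aeq x(3) by simp
    have b1: "b \<ge> 1" using beq q(3) by simp
    have m2pos: "m2 \<ge> 1" using m2c a1 b1 by auto
    have s2: "singular (DP w G) v" unfolding sing2 l2x using m2pos m2eq l2x by simp
    show ?thesis using m2c a1 b1 m1eq sG s2 by auto
  next
    case True
    then obtain y where y: "var_of y = w" "y \<in> C" by blast
    have cyC: "comp y \<notin> C" using taut[OF cC y(2)] .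
    have yv: "var_of y \<noteq> var_of x" using y x vw by simp
    define dy where "dy = card {D \<in> G. comp x \<in> D \<and> y \<in> D}"
    have h1: "ldeg (DP v G) y + 1 + dy = ldeg G y + a"
      using degv(1)[of y] yv x y unfolding dy_def aeq by simp
    have h2: "ldeg (DP v G) (comp y) = ldeg G (comp y)"
      using degv(2)[of "comp y"] yv x cyC by simp
    have ly: "dy + 1 \<le> ldeg G y" unfolding dy_def ldeg_def
    proof (rule card_bound)
      show "finite {C \<in> G. y \<in> C}" using fin by simp
      show "insert C {D \<in> G. comp x \<in> D \<and> y \<in> D} \<subseteq> {C \<in> G. y \<in> C}" using C y by auto
      show "C \<notin> {D \<in> G. comp x \<in> D \<and> y \<in> D}" using taut[OF cC C(2)] by simp
    qed
    have dya: "dy \<le> a" unfolding dy_def aeq ldeg_def using fin by (intro card_mono) auto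
    have a1: "a \<ge> 1" using aeq x(3) by simp
    have s1: "min (ldeg (DP v G) y) (ldeg (DP v G) (comp y)) = 1"
      using sw sing_iff_lit[of "DP v G" y] y by simp
    have beq: "b + 1 = ldeg (DP v G) y + ldeg (DP v G) (comp y)"
      unfolding b_def using vdeg_lit[of "DP v G" y] y s1
      by (metis Suc_eq_plus1 add_diff_inverse_nat le_add2 le_trans min.cobounded1 min.cobounded2 not_less_eq_eq nat_le_linear plus_1_eq_Suc add_le_mono1 le_add1 diff_add one_le_numeral)
    have m1eq: "m1 = ldeg G y + ldeg G (comp y) - 1" unfolding m1_def using vdeg_lit[of G y] y by simp
    show ?thesis
    proof (cases "ldeg G (comp y) = 1")
      case True
      obtain C' where C': "C' \<in> G" "comp y \<in> C'" using ldeg1_ex[OF True] by blast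
      have xC': "x \<notin> C'"
      proof
        assume "x \<in> C'" then have "C' = C" using ldeg1_unique[OF x(2) C'(1) _ C] by simp
        then show False using cyC C' by simp
      qed
      have cxC': "comp x \<notin> C'"
      proof
        assume cx: "comp x \<in> C'"
        have cl: "C \<inter> comp ` C' = {x}" using clash[OF mu x(2) C C'(1) cx] .
        have "y \<in> comp ` C'" using C'(2) by (simp add: in_comp_image)
        then have "y \<in> C \<inter> comp ` C'" using y by simp
        then have "y = x" using cl by simp
        then show False using yv by simp
      qed
      have ww: "var_of (comp y) = w" using y by simp
      note degw = deg[OF mu True C', unfolded ww]
      have xw: "var_of x \<noteq> w" using x vw by simp
      have l2x: "ldeg (DP w G) x = 1" using degw(2)[OF xw xC'] x by simp
      have l2cx: "ldeg (DP w G) (comp x) = a" using degw(2)[of "comp x"] xw cxC' aeq by simp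
      have m2a: "m2 = a" using m2eq l2x l2cx by simp
      have s2: "singular (DP w G) v" unfolding sing2 l2x l2cx using a1 by simp
      have sG: "singular G w" using sing_iff_lit[of G y] y True ly by simp
      have bb: "b = ldeg (DP v G) y" using beq h2 True by simp
      have m1y: "m1 = ldeg G y" using m1eq True by simp
      show ?thesis using m2a s2 sG bb m1y h1 ly dya a1 by auto
    next
      case False
      have c2: "ldeg (DP v G) (comp y) \<noteq> 1" using h2 False by simp
      then have l1y: "ldeg (DP v G) y = 1" using s1 by (simp add: min_def split: if_splits)
      have c2b: "ldeg (DP v G) (comp y) \<ge> 2" using s1 c2 by (simp add: min_def split: if_splits)
      have aa: "a = 1" "ldeg G y = dy + 1" using h1 l1y ly a1 by auto
      have bb: "b = ldeg G (comp y)" using beq l1y h2 by simp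
      have "singular (DP w G) v \<and> m1 \<ge> 2" if sG: "singular G w"
      proof -
        have "min (ldeg G y) (ldeg G (comp y)) = 1" using sG sing_iff_lit[of G y] y by simp
        then have ly1: "ldeg G y = 1" using False by (simp add: min_def split: if_splits)
        note degw = deg[OF mu ly1 C(1) y(2), unfolded y(1)]
        have xw: "var_of x \<noteq> var_of y" using yv by simp
        have e: "{D \<in> G. comp y \<in> D \<and> x \<in> D} = {}"
        proof (rule ccontr)
          assume "{D \<in> G. comp y \<in> D \<and> x \<in> D} \<noteq> {}"
          then obtain D where D: "D \<in> G" "comp y \<in> D" "x \<in> D" by blast
          then have "D = C" using ldeg1_unique[OF x(2) D(1) D(3) C] by simp
          then show False using D cyC by simp
        qed
        have l2x: "ldeg (DP w G) x = b"
          using degw(1)[of x] xw C(2) x e bb y by simp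
        have cxC: "comp x \<notin> C" using taut[OF cC C(2)] .
        have l2cx: "ldeg (DP w G) (comp x) = 1"
          using degw(2)[of "comp x"] xw cxC aa aeq y by simp
        have s2: "singular (DP w G) v" unfolding sing2 l2x l2cx using c2b bb h2 by simp
        have "m1 = b" using m1eq ly1 bb by simp
        then show ?thesis using s2 c2b bb h2 by simp
      qed
      then show ?thesis using aa c2b bb h2 by auto
    qed
  qed
qed


lemma DP_elim:
  assumes "E \<in> DP u H"
  obtains "E \<in> H" "Pos u \<notin> E" "Neg u \<notin> E"
  | P N where "P \<in> H" "N \<in> H" "Pos u \<in> P" "Neg u \<in> N" "E = P \<union> N - {Pos u, Neg u}"
proof -
  from assms consider "E \<in> H" "u \<notin> vars E"
    | C D where "C \<in> H" "D \<in> H" "C \<inter> comp ` D = {Pos u}" "E = C \<union> D - {Pos u, Neg u}"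
    unfolding DP_def by blast
  then show thesis
  proof cases
    case 1 then show ?thesis using that(1) by (simp add: in_vars)
  next
    case 2
    have "Pos u \<in> C" "comp (Pos u) \<in> D" using clash_mem[OF 2(3)] by simp_all
    then show ?thesis using that(2)[OF 2(1,2)] 2(4) by simp
  qed
qed

lemma DP_keep: "E \<in> H \<Longrightarrow> Pos u \<notin> E \<Longrightarrow> Neg u \<notin> E \<Longrightarrow> E \<in> DP u H"
  unfolding DP_def by (simp add: in_vars)

lemma DP_res:
  assumes mu: "min_unsat H" and s: "singular H u" and P: "P \<in> H" "Pos u \<in> P" and N: "N \<in> H" "Neg u \<in> N"
  shows "P \<union> N - {Pos u, Neg u} \<in> DP u H"
proof -
  obtain x where x: "var_of x = u" "ldeg H x = 1" using sing_lit[OF s] by blast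
  have m: "E \<in> DP u H" if "X \<in> H" "Y \<in> H" "x \<in> X" "comp x \<in> Y" "E = X \<union> Y - {x, comp x}" for E X Y
    using mem_DP_lit[OF mu x(2), of E] that x(1) by blast
  show ?thesis
  proof (cases x)
    case (Pos v)
    then show ?thesis using m[OF P(1) N(1)] P N x(1) by simp
  next
    case (Neg v)
    have "P \<union> N - {Pos u, Neg u} = N \<union> P - {x, comp x}" using Neg x(1) by auto
    then show ?thesis using m[OF N(1) P(1)] P N x(1) Neg by simp
  qed
qed

lemma eq1: "P \<inter> W = {} \<Longrightarrow> P \<union> (A \<union> B - W) - V = (P \<union> A - V) \<union> (P \<union> B - V) - W" by blast
lemma eq2: "P \<inter> W = {} \<Longrightarrow> B \<inter> V = {} \<Longrightarrow> P \<union> (A \<union> B - W) - V = (P \<union> A - V) \<union> B - W" by blast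
lemma eq3: "P \<inter> W = {} \<Longrightarrow> A \<inter> V = {} \<Longrightarrow> P \<union> (A \<union> B - W) - V = A \<union> (P \<union> B - V) - W" by blast
lemma eq4: "N \<inter> W = {} \<Longrightarrow> (A \<union> B - W) \<union> N - V = (A \<union> N - V) \<union> (B \<union> N - V) - W" by blast
lemma eq5: "N \<inter> W = {} \<Longrightarrow> B \<inter> V = {} \<Longrightarrow> (A \<union> B - W) \<union> N - V = (A \<union> N - V) \<union> B - W" by blast
lemma eq6: "N \<inter> W = {} \<Longrightarrow> A \<inter> V = {} \<Longrightarrow> (A \<union> B - W) \<union> N - V = A \<union> (B \<union> N - V) - W" by blast
lemma eq7: "A \<inter> V = {} \<Longrightarrow> (A \<union> B - W) \<union> (A \<union> C - W) - V = A \<union> (B \<union> C - V) - W" by blast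
lemma eq8: "C \<inter> V = {} \<Longrightarrow> (A \<union> C - W) \<union> (B \<union> C - W) - V = (A \<union> B - V) \<union> C - W" by blast

lemma comm_incl:
  assumes mu: "min_unsat G" and sv: "singular G v" and sw: "singular G w"
    and svw: "singular (DP v G) w" and swv: "singular (DP w G) v" and vw: "v \<noteq> w"
  shows "DP v (DP w G) \<subseteq> DP w (DP v G)"
proof
  fix E assume E: "E \<in> DP v (DP w G)"
  define V where "V = {Pos v, Neg v}"
  define W where "W = {Pos w, Neg w}"
  have mu1: "min_unsat (DP v G)" using DP_MU_sing[OF mu sv] .
  have mu2: "min_unsat (DP w G)" using DP_MU_sing[OF mu sw] .
  have keep1: "X \<in> DP v G" if "X \<in> G" "X \<inter> V = {}" for X
    using DP_keep[of X G v] that unfolding V_def by blast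
  have res1: "P \<union> N - V \<in> DP v G" if "P \<in> G" "Pos v \<in> P" "N \<in> G" "Neg v \<in> N" for P N
    using DP_res[OF mu sv that] unfolding V_def .
  have keep12: "X \<in> DP w (DP v G)" if "X \<in> DP v G" "X \<inter> W = {}" for X
    using DP_keep[of X "DP v G" w] that unfolding W_def by blast
  have res12: "P \<union> N - W \<in> DP w (DP v G)" if "P \<in> DP v G" "Pos w \<in> P" "N \<in> DP v G" "Neg w \<in> N" for P N
    using DP_res[OF mu1 svw that] unfolding W_def .
  have vW: "Pos v \<notin> W" "Neg v \<notin> W" and wV: "Pos w \<notin> V" "Neg w \<notin> V"
    using vw unfolding V_def W_def by auto
  show "E \<in> DP w (DP v G)"
  proof (cases rule: DP_elim[OF E])
    case 1
    then show ?thesis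
    proof (cases rule: DP_elim[OF 1(1)])
      case 1
      have "E \<inter> V = {}" "E \<inter> W = {}" using 1 \<open>Pos v \<notin> E\<close> \<open>Neg v \<notin> E\<close> unfolding V_def W_def by auto
      then show ?thesis using keep1 keep12 1 by blast
    next
      case (2 P N)
      have "P \<inter> V = {}" "N \<inter> V = {}" using 2 \<open>Pos v \<notin> E\<close> \<open>Neg v \<notin> E\<close> vW unfolding V_def W_def by auto
      then have "P \<in> DP v G" "N \<in> DP v G" using keep1 2 by blast+
      then show ?thesis using res12 2 unfolding W_def by blast
    qed
  next
    case (2 P N)
    have EPN: "E = P \<union> N - V" using 2 unfolding V_def by simp
    have nP: "Neg v \<notin> P" using taut[OF mu_clause[OF mu2 2(1)] 2(3)] by simp
    have nN: "Pos v \<notin> N" using taut[OF mu_clause[OF mu2 2(2)] 2(4)] by simp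
    show ?thesis
    proof (cases rule: DP_elim[OF 2(1)])
      case 1
      have PW: "P \<inter> W = {}" using 1 unfolding W_def by auto
      show ?thesis
      proof (cases rule: DP_elim[OF 2(2)])
        case 1
        have NW: "N \<inter> W = {}" using 1 unfolding W_def by auto
        have "E \<in> DP v G" using res1[OF \<open>P \<in> G\<close> \<open>Pos v \<in> P\<close> \<open>N \<in> G\<close> \<open>Neg v \<in> N\<close>] EPN by simp
        moreover have "E \<inter> W = {}" using PW NW EPN by blast
        ultimately show ?thesis using keep12 by simp
      next
        case (2 P2 N2)
        have NE: "N = P2 \<union> N2 - W" using 2 unfolding W_def by simp
        have "Neg v \<in> P2 \<or> Neg v \<in> N2" using \<open>Neg v \<in> N\<close> NE by blast
        moreover have "Pos v \<notin> P2" "Pos v \<notin> N2" using nN NE vW by blast+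
        moreover have Pv: "P \<in> G" "Pos v \<in> P" using 1 \<open>Pos v \<in> P\<close> by simp_all
        ultimately consider "Neg v \<in> P2" "Neg v \<in> N2" | "Neg v \<in> P2" "N2 \<inter> V = {}"
          | "P2 \<inter> V = {}" "Neg v \<in> N2" unfolding V_def by blast
        then show ?thesis
        proof cases
          case 1
          have "E = (P \<union> P2 - V) \<union> (P \<union> N2 - V) - W" using EPN NE eq1[OF PW] by simp
          moreover have "P \<union> P2 - V \<in> DP v G" "P \<union> N2 - V \<in> DP v G"
            using res1[OF Pv \<open>P2 \<in> G\<close> 1(1)] res1[OF Pv \<open>N2 \<in> G\<close> 1(2)] by simp_all
          moreover have "Pos w \<in> P \<union> P2 - V" "Neg w \<in> P \<union> N2 - V" using 2 wV by auto
          ultimately show ?thesis using res12 by metis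
        next
          case 3
          have "E = P2 \<union> (P \<union> N2 - V) - W" using EPN NE eq3[OF PW 3(1)] by simp
          moreover have "P \<union> N2 - V \<in> DP v G" using res1[OF Pv \<open>N2 \<in> G\<close> 3(2)] by simp
          moreover have "P2 \<in> DP v G" using keep1[OF \<open>P2 \<in> G\<close> 3(1)] by simp
          moreover have "Pos w \<in> P2" "Neg w \<in> P \<union> N2 - V" using 2 wV by auto
          ultimately show ?thesis using res12 by metis
        next
          case 2
          have "E = (P \<union> P2 - V) \<union> N2 - W" using EPN NE eq2[OF PW 2(2)] by simp
          moreover have "P \<union> P2 - V \<in> DP v G" using res1[OF Pv \<open>P2 \<in> G\<close> 2(1)] by simp
          moreover have "N2 \<in> DP v G" using keep1[OF \<open>N2 \<in> G\<close> 2(2)] by simp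
          moreover have "Pos w \<in> P \<union> P2 - V" "Neg w \<in> N2" using \<open>Pos w \<in> P2\<close> \<open>Neg w \<in> N2\<close> wV by auto
          ultimately show ?thesis using res12 by metis
        qed
      qed
    next
      case (2 P1 N1)
      have PE: "P = P1 \<union> N1 - W" using 2 unfolding W_def by simp
      have pv: "Pos v \<in> P1 \<or> Pos v \<in> N1" using \<open>Pos v \<in> P\<close> PE by blast
      have nv: "Neg v \<notin> P1" "Neg v \<notin> N1" using nP PE vW by blast+
      show ?thesis
      proof (cases rule: DP_elim[OF \<open>N \<in> DP w G\<close>])
        case 1
        have NW: "N \<inter> W = {}" using 1 unfolding W_def by auto
        have Nv: "N \<in> G" "Neg v \<in> N" using 1 \<open>Neg v \<in> N\<close> by simp_all
        from pv nv consider "Pos v \<in> P1" "Pos v \<in> N1" | "Pos v \<in> P1" "N1 \<inter> V = {}"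
          | "P1 \<inter> V = {}" "Pos v \<in> N1" unfolding V_def by blast
        then show ?thesis
        proof cases
          case 1
          have "E = (P1 \<union> N - V) \<union> (N1 \<union> N - V) - W" using EPN PE eq4[OF NW] by simp
          moreover have "P1 \<union> N - V \<in> DP v G" "N1 \<union> N - V \<in> DP v G"
            using res1[OF \<open>P1 \<in> G\<close> 1(1) Nv] res1[OF \<open>N1 \<in> G\<close> 1(2) Nv] by simp_all
          moreover have "Pos w \<in> P1 \<union> N - V" "Neg w \<in> N1 \<union> N - V" using 2 wV by auto
          ultimately show ?thesis using res12 by metis
        next
          case 2
          have "E = (P1 \<union> N - V) \<union> N1 - W" using EPN PE eq5[OF NW 2(2)] by simp
          moreover have "P1 \<union> N - V \<in> DP v G" using res1[OF \<open>P1 \<in> G\<close> 2(1) Nv] by simp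
          moreover have "N1 \<in> DP v G" using keep1[OF \<open>N1 \<in> G\<close> 2(2)] by simp
          moreover have "Pos w \<in> P1 \<union> N - V" "Neg w \<in> N1" using \<open>Pos w \<in> P1\<close> \<open>Neg w \<in> N1\<close> wV by auto
          ultimately show ?thesis using res12 by metis
        next
          case 3
          have "E = P1 \<union> (N1 \<union> N - V) - W" using EPN PE eq6[OF NW 3(1)] by simp
          moreover have "N1 \<union> N - V \<in> DP v G" using res1[OF \<open>N1 \<in> G\<close> 3(2) Nv] by simp
          moreover have "P1 \<in> DP v G" using keep1[OF \<open>P1 \<in> G\<close> 3(1)] by simp
          moreover have "Pos w \<in> P1" "Neg w \<in> N1 \<union> N - V" using \<open>Pos w \<in> P1\<close> \<open>Neg w \<in> N1\<close> wV by auto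
          ultimately show ?thesis using res12 by metis
        qed
      next
        case (2 P2 N2)
        have NE: "N = P2 \<union> N2 - W" using 2 unfolding W_def by simp
        have nv2: "Pos v \<notin> P2" "Pos v \<notin> N2" using nN NE vW by blast+
        have qv: "Neg v \<in> P2 \<or> Neg v \<in> N2" using \<open>Neg v \<in> N\<close> NE by blast
        obtain z where z: "var_of z = w" "ldeg G z = 1" using sing_lit[OF sw] by blast
        show ?thesis
        proof (cases z)
          case (Pos w')
          then have l: "ldeg G (Pos w) = 1" using z by simp
          have "P1 = P2" using ldeg1_unique[OF l] \<open>P1 \<in> G\<close> \<open>P2 \<in> G\<close> \<open>Pos w \<in> P1\<close> \<open>Pos w \<in> P2\<close> by blast
          then have P1V: "P1 \<inter> V = {}" using nv(1) nv2(1) unfolding V_def by blast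
          then have Pn: "Pos v \<in> N1" "Neg v \<in> N2" using pv qv \<open>P1 = P2\<close> unfolding V_def by blast+
          have "E = P1 \<union> (N1 \<union> N2 - V) - W" using EPN PE NE \<open>P1 = P2\<close> eq7[OF P1V] by simp
          moreover have "N1 \<union> N2 - V \<in> DP v G" using res1[OF \<open>N1 \<in> G\<close> Pn(1) \<open>N2 \<in> G\<close> Pn(2)] by simp
          moreover have "P1 \<in> DP v G" using keep1[OF \<open>P1 \<in> G\<close> P1V] by simp
          moreover have "Pos w \<in> P1" "Neg w \<in> N1 \<union> N2 - V" using \<open>Pos w \<in> P1\<close> \<open>Neg w \<in> N1\<close> wV by auto
          ultimately show ?thesis using res12 by metis
        next
          case (Neg w')
          then have l: "ldeg G (Neg w) = 1" using z by simp
          have "N1 = N2" using ldeg1_unique[OF l] \<open>N1 \<in> G\<close> \<open>N2 \<in> G\<close> \<open>Neg w \<in> N1\<close> \<open>Neg w \<in> N2\<close> by blast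
          then have N1V: "N1 \<inter> V = {}" using nv(2) nv2(2) unfolding V_def by blast
          then have Pn: "Pos v \<in> P1" "Neg v \<in> P2" using pv qv \<open>N1 = N2\<close> unfolding V_def by blast+
          have "E = (P1 \<union> P2 - V) \<union> N1 - W" using EPN PE NE \<open>N1 = N2\<close> eq8[OF N1V] by simp
          moreover have "P1 \<union> P2 - V \<in> DP v G" using res1[OF \<open>P1 \<in> G\<close> Pn(1) \<open>P2 \<in> G\<close> Pn(2)] by simp
          moreover have "N1 \<in> DP v G" using keep1[OF \<open>N1 \<in> G\<close> N1V] by simp
          moreover have "Pos w \<in> P1 \<union> P2 - V" "Neg w \<in> N1" using \<open>Pos w \<in> P1\<close> \<open>Neg w \<in> N1\<close> wV by auto
          ultimately show ?thesis using res12 by metis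
        qed
      qed
    qed
  qed
qed

lemma comm:
  assumes mu: "min_unsat G" and sv: "singular G v" and sw: "singular G w"
    and svw: "singular (DP v G) w" and swv: "singular (DP w G) v" and vw: "v \<noteq> w"
  shows "DP v (DP w G) = DP w (DP v G)"
proof -
  have inc: "DP v (DP w G) \<subseteq> DP w (DP v G)" using comm_incl[OF assms] .
  have m12: "min_unsat (DP w (DP v G))" using DP_MU_sing[OF DP_MU_sing[OF mu sv] svw] .
  have m21: "min_unsat (DP v (DP w G))" using DP_MU_sing[OF DP_MU_sing[OF mu sw] swv] .
  show ?thesis
  proof (rule ccontr)
    assume "DP v (DP w G) \<noteq> DP w (DP v G)"
    then have "DP v (DP w G) \<subset> DP w (DP v G)" using inc by blast
    then have "satisfiable (DP v (DP w G))" using m12 unfolding min_unsat_def by blast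
    then show False using m21 unfolding min_unsat_def by blast
  qed
qed


lemma DPs_snoc: "DPs F (xs @ [a]) = DP a (DPs F xs)"
  by (simp add: DPs_def)

lemma DPs_take_Suc: "j < length xs \<Longrightarrow> DPs F (take (Suc j) xs) = DP (xs ! j) (DPs F (take j xs))"
  by (simp add: take_Suc_conv_app_nth DPs_snoc)

lemma DPs_split: "m \<le> j \<Longrightarrow> DPs F (take j xs) = fold DP (drop m (take j xs)) (DPs F (take m xs))"
proof -
  assume "m \<le> j"
  have "take j xs = take m (take j xs) @ drop m (take j xs)" by (rule append_take_drop_id[symmetric])
  also have "take m (take j xs) = take m xs" using \<open>m \<le> j\<close> by (simp add: min_def)
  finally show ?thesis unfolding DPs_def by (metis fold_append comp_apply)
qed

lemma prefix_MU:
  assumes st: "singular_tuple F vs"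
  shows "j \<le> length vs \<Longrightarrow> min_unsat (DPs F (take j vs))"
proof (induction j)
  case 0
  then show ?case using st by (simp add: singular_tuple_def DPs_def)
next
  case (Suc j)
  then have j: "j < length vs" by simp
  have "min_unsat (DPs F (take j vs))" using Suc by simp
  moreover have "singular (DPs F (take j vs)) (vs ! j)" using st j by (simp add: singular_tuple_def)
  ultimately show ?case using DPs_take_Suc[OF j] DP_MU_sing by metis
qed

theorem theorem41:
  fixes F :: "'v clause_set" and vs :: "'v list" and i :: nat
  assumes "min_unsat F"
    and "singular_tuple F vs"
    and "length vs \<ge> 2"
    and "Suc i < length vs"
  defines "vs' \<equiv> vs[i := vs ! Suc i, Suc i := vs ! i]"
  defines "m \<equiv> sing_deg F vs" and "m' \<equiv> sing_deg F vs'"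
  shows
    "(singular_tuple F vs' \<longrightarrow>
        (\<forall>j < length vs. j \<noteq> i \<and> j \<noteq> Suc i \<longrightarrow> m' j = m j))
     \<and> (m i \<ge> 2 \<longrightarrow>
          singular_tuple F vs'
          \<and> m' i \<le> m (Suc i) + 1
          \<and> m' (Suc i) \<ge> m i - 1
          \<and> (m (Suc i) = 1 \<longrightarrow> m' i = 1)
          \<and> (m (Suc i) \<ge> 2 \<longrightarrow> m' (Suc i) \<ge> 2))
     \<and> (m i = 1 \<longrightarrow>
          (m (Suc i) = 1 \<longrightarrow> singular_tuple F vs' \<and> m' (Suc i) = 1 \<and> m' i \<in> {1, 2})
          \<and> (m (Suc i) \<ge> 2 \<longrightarrow>
               (singular_tuple F vs' \<longleftrightarrow> singular (DPs F (take i vs)) (vs ! Suc i))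
               \<and> (singular_tuple F vs' \<longrightarrow> m' i \<ge> 2)))"
proof -
  have st: "singular_tuple F vs" using assms(2) .
  have i1: "i < length vs" using assms(4) by simp
  define v where "v = vs ! i"
  define w where "w = vs ! Suc i"
  define G where "G = DPs F (take i vs)"
  have len': "length vs' = length vs" unfolding vs'_def by simp
  have muG: "min_unsat G" unfolding G_def using prefix_MU[OF st] i1 by simp
  have sv: "singular G v" using st i1 unfolding singular_tuple_def G_def v_def by blast
  have G1: "DPs F (take (Suc i) vs) = DP v G" unfolding G_def v_def using DPs_take_Suc[OF i1] .
  have sw1: "singular (DP v G) w" using st assms(4) G1 unfolding singular_tuple_def w_def by metis
  have vw: "v \<noteq> w" using sing_DP_neq[OF sw1] by simp
  have nth'1: "vs' ! i = w" unfolding vs'_def w_def using i1 by simp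
  have nth'2: "vs' ! Suc i = v" unfolding vs'_def v_def using assms(4) by simp
  have nth'3: "vs' ! j = vs ! j" if "j \<noteq> i" "j \<noteq> Suc i" for j
    unfolding vs'_def using that by simp
  have tk'0: "take i vs' = take i vs" unfolding vs'_def by simp
  have D'1: "DPs F (take i vs') = G" unfolding tk'0 G_def ..
  have D'2: "DPs F (take (Suc i) vs') = DP w G"
    using DPs_take_Suc[of i vs' F] i1 len' D'1 nth'1 by simp
  have D'3: "DPs F (take (Suc (Suc i)) vs') = DP v (DP w G)"
    using DPs_take_Suc[of "Suc i" vs' F] assms(4) len' D'2 nth'2 by simp
  have D3: "DPs F (take (Suc (Suc i)) vs) = DP w (DP v G)"
    using DPs_take_Suc[of "Suc i" vs F] assms(4) G1 unfolding w_def by simp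
  have dropeq: "drop (Suc (Suc i)) (take j vs') = drop (Suc (Suc i)) (take j vs)" for j
    unfolding vs'_def take_update_swap by simp
  have same: "DPs F (take j vs') = DPs F (take j vs)"
    if sG: "singular G w" and s2: "singular (DP w G) v" and j: "j \<noteq> i" "j \<noteq> Suc i" for j
  proof (cases "j < i")
    case True
    then have "take j vs' = take j vs" unfolding vs'_def by simp
    then show ?thesis by simp
  next
    case False
    then have ji: "Suc (Suc i) \<le> j" using j by simp
    have cm: "DP v (DP w G) = DP w (DP v G)" using comm[OF muG sv sG sw1 s2 vw] .
    show ?thesis
      using DPs_split[OF ji, of F vs'] DPs_split[OF ji, of F vs] D'3 D3 cm dropeq by simp
  qed
  have S: "singular_tuple F vs' \<longleftrightarrow> singular G w \<and> singular (DP w G) v"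
  proof
    assume h: "singular_tuple F vs'"
    have "singular (DPs F (take i vs')) (vs' ! i)" using h i1 len' unfolding singular_tuple_def by simp
    moreover have "singular (DPs F (take (Suc i) vs')) (vs' ! Suc i)"
      using h assms(4) len' unfolding singular_tuple_def by simp
    ultimately show "singular G w \<and> singular (DP w G) v" using D'1 D'2 nth'1 nth'2 by simp
  next
    assume h: "singular G w \<and> singular (DP w G) v"
    have "singular (DPs F (take j vs')) (vs' ! j)" if j: "j < length vs'" for j
    proof -
      consider "j = i" | "j = Suc i" | "j \<noteq> i" "j \<noteq> Suc i" by blast
      then show ?thesis
      proof cases
        case 1 then show ?thesis using h D'1 nth'1 by simp
      next
        case 2 then show ?thesis using h D'2 nth'2 by simp
      next
        case 3
        have "singular (DPs F (take j vs)) (vs ! j)" using st j len' unfolding singular_tuple_def by simp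
        then show ?thesis using same[OF conjunct1[OF h] conjunct2[OF h] 3] nth'3[OF 3] by simp
      qed
    qed
    then show "singular_tuple F vs'" using assms(1) unfolding singular_tuple_def by blast
  qed
  have mi: "m i = vdeg G v - 1" unfolding m_def sing_deg_def G_def v_def ..
  have mi1: "m (Suc i) = vdeg (DP v G) w - 1" unfolding m_def sing_deg_def G1 w_def ..
  have mi': "m' i = vdeg G w - 1" unfolding m'_def sing_deg_def D'1 nth'1 ..
  have mi1': "m' (Suc i) = vdeg (DP w G) v - 1" unfolding m'_def sing_deg_def D'2 nth'2 ..
  have P1: "singular_tuple F vs' \<longrightarrow> (\<forall>j < length vs. j \<noteq> i \<and> j \<noteq> Suc i \<longrightarrow> m' j = m j)"
  proof (intro impI allI)
    fix j assume h: "singular_tuple F vs'" "j < length vs" "j \<noteq> i \<and> j \<noteq> Suc i"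
    have "singular G w" "singular (DP w G) v" using h(1) S by simp_all
    then show "m' j = m j" unfolding m_def m'_def sing_deg_def
      using same[of j] nth'3[of j] h(3) by simp
  qed
  have mlf: "(m i \<ge> 2 \<longrightarrow> singular G w \<and> singular (DP w G) v \<and> m' i \<le> m (Suc i) + 1 \<and> m' (Suc i) \<ge> m i - 1
              \<and> (m (Suc i) = 1 \<longrightarrow> m' i = 1) \<and> (m (Suc i) \<ge> 2 \<longrightarrow> m' (Suc i) \<ge> 2))
         \<and> (m i = 1 \<longrightarrow> (m (Suc i) = 1 \<longrightarrow> singular G w \<and> singular (DP w G) v \<and> m' (Suc i) = 1 \<and> m' i \<in> {1,2})
              \<and> (m (Suc i) \<ge> 2 \<longrightarrow> singular G w \<longrightarrow> singular (DP w G) v \<and> m' i \<ge> 2))"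
    unfolding mi mi1 mi' mi1' by (rule main_local[OF muG sv sw1])
  have sG': "singular (DPs F (take i vs)) (vs ! Suc i) \<longleftrightarrow> singular G w" unfolding G_def w_def ..
  show ?thesis unfolding sG' using P1 mlf S by blast
qed

end
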